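(* Let $\mathcal{S}=(X,\xrightarrow{\Sigma},\le)$ be a very-WSTS and $I_0\in\mathrm{Idl}(X)$. (1) For all $y,z\in X$, $w\in\Sigma^*$ and states $c$ of $\mathcal{A}_{I_0}$: if $y\xrightarrow{w}z$ and $y\in\mathrm{ideal}(c)$, then there is a state $d$ of $\mathcal{A}_{I_0}$ such that $d$ can be reached from $c$ by reading $w$ in $\mathcal{A}_{I_0}$ and $z\in\mathrm{ideal}(d)$. (2) For all $z\in X$, $w\in\Sigma^*$ and states $c,d$ of $\mathcal{K}_{I_0}$: if $d$ can be reached from $c$ by reading $w$ in $\mathcal{K}_{I_0}$ and $z\in\mathrm{ideal}(d)$, then there exist $y\in\mathrm{ideal}(c)$, a word $w'$ with $w\preceq w'$, and $z'\ge z$ such that $y\xrightarrow{w'}z'$.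
   Context: A (labeled, ordered) transition system is $\mathcal{S}=(X,\xrightarrow{\Sigma},\le)$: $X$ a set, $\Sigma$ a finite alphabet, relations $\xrightarrow{a}\subseteq X\times X$ ($a\in\Sigma$), $\le$ a quasi-ordering. Relations extend to words ($x\xrightarrow{\varepsilon}x$; $x\xrightarrow{wa}y$ iff $x\xrightarrow{w}x'\xrightarrow{a}y$ for some $x'$). $\mathrm{Post}(x,w)=\{y:x\xrightarrow{w}y\}$, extended to sets by union; $\downarrow D=\{x:x\le y,\ y\in D\}$. $u\preceq v$ means $u$ is a (scattered) subword of $v$. WSTS: $\le$ is a wqo and $x\xrightarrow{a}y$, $x'\ge x$ imply $x'\xrightarrow{w}y'$ for some $w$, $y'\ge y$. Strong monotonicity: $x\xrightarrow{a}y$, $x'\ge x$ imply $x'\xrightarrow{a}y'$ with $y'\ge y$; strong-strict: additionally $x'>x$ gives such $y'>y$. Deterministic: $|\mathrm{Post}(x,a)|\le1$. Ideals: nonempty downward-closed directed subsets; $\mathrm{Idl}(X)$ their set. $\mathrm{IdealDecomp}(D)$: the finite set of maximal ideals in a downward-closed $D$ (for $X$ wqo). Completion $\widehat{\mathcal{S}}=(\mathrm{Idl}(X),\Rightarrow_\Sigma,\subseteq)$, $I\xRightarrow{a}J$ iff $J\in\mathrm{IdealDecomp}(\downarrow\mathrm{Post}(I,a))$, extended to words; if deterministic, $w(I)$ is the unique $J$ with $I\xRightarrow{w}J$ when defined. Acceleration candidate: strictly increasing sequence of ideals; $\mathrm{Idl}_0(X)=\mathrm{Idl}(X)$, $\mathrm{Idl}_n(X)$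 = unions of acceleration candidates in $\mathrm{Idl}_{n-1}(X)$; finitely many levels if some $\mathrm{Idl}_n(X)=\emptyset$. $w^\infty(I)=\bigcup_kw^k(I)$ if $I\subset w(I)$, else $I$ ($w\in\Sigma^+$). Very-WSTS: WSTS with strong monotonicity whose completion is a deterministic WSTS (with $\subseteq$ a wqo on $\mathrm{Idl}(X)$) with strong-strict monotonicity, and $\mathrm{Idl}(X)$ has finitely many levels. Ideal Karp-Miller algorithm on input $(\mathcal{S},I_0)$ (terminating for very-WSTS): builds a rooted tree with node labels $(\mathrm{ideal}(c),\mathrm{numaccel}(c))\in\mathrm{Idl}(X)\times\mathbb{N}$ and letter-labeled arcs, starting from root $r:(I_0,0)$. While some node $c:(I,n)$ is unmarked: if a proper ancestor $c'$ has $\mathrm{ideal}(c')=I$, mark $c$; otherwise, if a proper ancestor $c'$ has $\mathrm{ideal}(c')\subset I$ and $\mathrm{numaccel}(c')=n$, relabel $c$ by $(w^\infty(I),n+1)$ where $w$ is the arc-label word from $c'$ to $c$ ($c$ is accelerated because of $c'$); then, with $(I,n)$ the current label, add for each $a\in\Sigma$ with $a(I)$ defined a child $d:(a(I),n)$ via an $a$-arc; mark $c$. $\mathcal{T}_{I_0}$ is the returned tree. The stuttering automaton $\mathcal{A}_{I_0}$: states are the nodes of $\mathcal{T}_{I_0}$, all accepting, initial state the root, transitions the arcs of $\mathcal{T}_{I_0}$ plus an $\varepsilon$-transition from each leaf $c$ to any ancestor $c'$ with $\mathrm{ideal}(c)=\mathrm{ideal}(c')$. The Karp-Miller automaton $\mathcal{K}_{I_0}$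 additionally has an $\varepsilon$-transition from each accelerated node $c$ to the ancestor $c'$ because of which it was accelerated. "Reaching $d$ from $c$ by reading $w$" allows $\varepsilon$-transitions. *)

theory Defs
  imports Main "HOL-Library.Sublist"
begin

text \<open>A transition system is given by a type 'x of states (X = UNIV), a finite alphabet
  (the finite type 'a), a labelled step relation  step a x y  (x --a--> y) and a quasi-ordering le.\<close>

fun steps :: "('a \<Rightarrow> 'x \<Rightarrow> 'x \<Rightarrow> bool) \<Rightarrow> 'a list \<Rightarrow> 'x \<Rightarrow> 'x \<Rightarrow> bool" where
  "steps step [] x y = (x = y)"
| "steps step (a # w) x y = (\<exists>x'. step a x x' \<and> steps step w x' y)"

definition wqo_on :: "'b set \<Rightarrow> ('b \<Rightarrow> 'b \<Rightarrow> bool) \<Rightarrow> bool" where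
  "wqo_on A r \<longleftrightarrow> (\<forall>x\<in>A. r x x) \<and> (\<forall>x\<in>A. \<forall>y\<in>A. \<forall>z\<in>A. r x y \<longrightarrow> r y z \<longrightarrow> r x z)
     \<and> (\<forall>f::nat \<Rightarrow> 'b. (\<forall>i. f i \<in> A) \<longrightarrow> (\<exists>i j. i < j \<and> r (f i) (f j)))"

definition downclosure :: "('x \<Rightarrow> 'x \<Rightarrow> bool) \<Rightarrow> 'x set \<Rightarrow> 'x set" where
  "downclosure le D = {x. \<exists>y\<in>D. le x y}"

definition Post :: "('a \<Rightarrow> 'x \<Rightarrow> 'x \<Rightarrow> bool) \<Rightarrow> 'x set \<Rightarrow> 'a \<Rightarrow> 'x set" where
  "Post step I a = {y. \<exists>x\<in>I. step a x y}"

definition is_ideal :: "('x \<Rightarrow> 'x \<Rightarrow> bool) \<Rightarrow> 'x set \<Rightarrow> bool" where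
  "is_ideal le I \<longleftrightarrow> I \<noteq> {} \<and> (\<forall>x\<in>I. \<forall>y. le y x \<longrightarrow> y \<in> I)
     \<and> (\<forall>x\<in>I. \<forall>y\<in>I. \<exists>z\<in>I. le x z \<and> le y z)"

definition Idl :: "('x \<Rightarrow> 'x \<Rightarrow> bool) \<Rightarrow> 'x set set" where
  "Idl le = {I. is_ideal le I}"

definition IdealDecomp :: "('x \<Rightarrow> 'x \<Rightarrow> bool) \<Rightarrow> 'x set \<Rightarrow> 'x set set" where
  "IdealDecomp le D = {I. is_ideal le I \<and> I \<subseteq> D \<and>
       (\<forall>J. is_ideal le J \<and> J \<subseteq> D \<and> I \<subseteq> J \<longrightarrow> J = I)}"

definition cstep :: "('a \<Rightarrow> 'x \<Rightarrow> 'x \<Rightarrow> bool) \<Rightarrow> ('x \<Rightarrow> 'x \<Rightarrow> bool) \<Rightarrow> 'a \<Rightarrow> 'x set \<Rightarrow> 'x set \<Rightarrow> bool" where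
  "cstep step le a I J \<longleftrightarrow> J \<in> IdealDecomp le (downclosure le (Post step I a))"

definition succ :: "('a \<Rightarrow> 'x \<Rightarrow> 'x \<Rightarrow> bool) \<Rightarrow> ('x \<Rightarrow> 'x \<Rightarrow> bool) \<Rightarrow> 'a \<Rightarrow> 'x set \<Rightarrow> 'x set option" where
  "succ step le a I = (if \<exists>!J. cstep step le a I J then Some (THE J. cstep step le a I J) else None)"

fun wapp :: "('a \<Rightarrow> 'x \<Rightarrow> 'x \<Rightarrow> bool) \<Rightarrow> ('x \<Rightarrow> 'x \<Rightarrow> bool) \<Rightarrow> 'a list \<Rightarrow> 'x set \<Rightarrow> 'x set option" where
  "wapp step le [] I = Some I"
| "wapp step le (a # w) I = (case succ step le a I of None \<Rightarrow> None | Some J \<Rightarrow> wapp step le w J)"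

fun wpow :: "('a \<Rightarrow> 'x \<Rightarrow> 'x \<Rightarrow> bool) \<Rightarrow> ('x \<Rightarrow> 'x \<Rightarrow> bool) \<Rightarrow> 'a list \<Rightarrow> nat \<Rightarrow> 'x set \<Rightarrow> 'x set option" where
  "wpow step le w 0 I = Some I"
| "wpow step le w (Suc k) I = Option.bind (wpow step le w k I) (wapp step le w)"

definition winf :: "('a \<Rightarrow> 'x \<Rightarrow> 'x \<Rightarrow> bool) \<Rightarrow> ('x \<Rightarrow> 'x \<Rightarrow> bool) \<Rightarrow> 'a list \<Rightarrow> 'x set \<Rightarrow> 'x set" where
  "winf step le w I = (if \<exists>J. wapp step le w I = Some J \<and> I \<subset> J
       then \<Union>{J. \<exists>k. wpow step le w k I = Some J} else I)"

fun Idl_level :: "('x \<Rightarrow> 'x \<Rightarrow> bool) \<Rightarrow> nat \<Rightarrow> 'x set set" where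
  "Idl_level le 0 = Idl le"
| "Idl_level le (Suc n) = {\<Union>(range f) | f. (\<forall>i. f i \<in> Idl_level le n) \<and> (\<forall>i. f i \<subset> f (Suc i))}"

definition wsts :: "('a \<Rightarrow> 'x \<Rightarrow> 'x \<Rightarrow> bool) \<Rightarrow> ('x \<Rightarrow> 'x \<Rightarrow> bool) \<Rightarrow> bool" where
  "wsts step le \<longleftrightarrow> wqo_on UNIV le \<and>
     (\<forall>a x y x'. step a x y \<and> le x x' \<longrightarrow> (\<exists>w y'. steps step w x' y' \<and> le y y'))"

definition strongly_monotone :: "('a \<Rightarrow> 'x \<Rightarrow> 'x \<Rightarrow> bool) \<Rightarrow> ('x \<Rightarrow> 'x \<Rightarrow> bool) \<Rightarrow> bool" where
  "strongly_monotone step le \<longleftrightarrow>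
     (\<forall>a x y x'. step a x y \<and> le x x' \<longrightarrow> (\<exists>y'. step a x' y' \<and> le y y'))"

definition very_wsts :: "('a::finite \<Rightarrow> 'x \<Rightarrow> 'x \<Rightarrow> bool) \<Rightarrow> ('x \<Rightarrow> 'x \<Rightarrow> bool) \<Rightarrow> bool" where
  "very_wsts step le \<longleftrightarrow>
     wsts step le \<and> strongly_monotone step le \<and>
     \<comment> \<open>the completion is a WSTS: subseteq is a wqo on Idl(X), and monotone\<close>
     wqo_on (Idl le) (\<subseteq>) \<and>
     (\<forall>a I J I'. I \<in> Idl le \<and> I' \<in> Idl le \<and> cstep step le a I J \<and> I \<subseteq> I' \<longrightarrow>
         (\<exists>w J'. (\<exists>K. wapp step le w I' = Some K \<and> J' = K) \<and> J \<subseteq> J')) \<and>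
     \<comment> \<open>the completion is deterministic\<close>
     (\<forall>a I J J'. I \<in> Idl le \<and> cstep step le a I J \<and> cstep step le a I J' \<longrightarrow> J = J') \<and>
     \<comment> \<open>strong-strict monotonicity of the completion\<close>
     (\<forall>a I J I'. I \<in> Idl le \<and> I' \<in> Idl le \<and> cstep step le a I J \<and> I \<subseteq> I' \<longrightarrow>
         (\<exists>J'. cstep step le a I' J' \<and> J \<subseteq> J')) \<and>
     (\<forall>a I J I'. I \<in> Idl le \<and> I' \<in> Idl le \<and> cstep step le a I J \<and> I \<subset> I' \<longrightarrow>
         (\<exists>J'. cstep step le a I' J' \<and> J \<subset> J')) \<and>
     \<comment> \<open>finitely many levels\<close>
     (\<exists>n. Idl_level le n = {})"

text \<open>Nodes of the tree are identified with the word labelling the path from the root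
  (the completion is deterministic, so each node has at most one a-child).
  lab c = (ideal(c), numaccel(c)); acc c = Some c' iff c was accelerated because of c'.
  km_pre gives the label a node receives when it is created.\<close>

definition km_pre :: "('a \<Rightarrow> 'x \<Rightarrow> 'x \<Rightarrow> bool) \<Rightarrow> ('x \<Rightarrow> 'x \<Rightarrow> bool) \<Rightarrow> 'x set
     \<Rightarrow> ('a list \<Rightarrow> 'x set \<times> nat) \<Rightarrow> 'a list \<Rightarrow> 'x set \<times> nat" where
  "km_pre step le I0 lab c = (if c = [] then (I0, 0)
     else (the (succ step le (last c) (fst (lab (butlast c)))), snd (lab (butlast c))))"

text \<open>T, lab, acc is a possible output of the ideal Karp-Miller algorithm on (S, I0).\<close>
definition KM_tree :: "('a \<Rightarrow> 'x \<Rightarrow> 'x \<Rightarrow> bool) \<Rightarrow> ('x \<Rightarrow> 'x \<Rightarrow> bool) \<Rightarrow> 'x set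
     \<Rightarrow> 'a list set \<Rightarrow> ('a list \<Rightarrow> 'x set \<times> nat) \<Rightarrow> ('a list \<Rightarrow> 'a list option) \<Rightarrow> bool" where
  "KM_tree step le I0 T lab acc \<longleftrightarrow> finite T \<and> [] \<in> T \<and> (\<forall>c a. c @ [a] \<in> T \<longrightarrow> c \<in> T) \<and>
    (\<forall>c\<in>T. let P = km_pre step le I0 lab c in
      (if \<exists>c'. strict_prefix c' c \<and> fst (lab c') = fst P
       then lab c = P \<and> acc c = None \<and> (\<forall>a. c @ [a] \<notin> T)
       else (if \<exists>c'. strict_prefix c' c \<and> fst (lab c') \<subset> fst P \<and> snd (lab c') = snd P
             then (\<exists>c'. strict_prefix c' c \<and> fst (lab c') \<subset> fst P \<and> snd (lab c') = snd P \<and>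
                     acc c = Some c' \<and>
                     lab c = (winf step le (drop (length c') c) (fst P), Suc (snd P)))
             else lab c = P \<and> acc c = None)
         \<and> (\<forall>a. c @ [a] \<in> T \<longleftrightarrow> succ step le a (fst (lab c)) \<noteq> None)))"

text \<open>Reading a word in an automaton whose states are the nodes of T, with tree arcs
  and an epsilon relation eps.\<close>
inductive reach :: "'a list set \<Rightarrow> ('a list \<Rightarrow> 'a list \<Rightarrow> bool) \<Rightarrow> 'a list \<Rightarrow> 'a list \<Rightarrow> 'a list \<Rightarrow> bool"
  for T eps where
  refl: "c \<in> T \<Longrightarrow> reach T eps c [] c"
| arc: "reach T eps c w d \<Longrightarrow> d @ [a] \<in> T \<Longrightarrow> reach T eps c (w @ [a]) (d @ [a])"
| eps: "reach T eps c w d \<Longrightarrow> eps d d' \<Longrightarrow> reach T eps c w d'"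

text \<open>epsilon-transitions of the stuttering automaton A_I0: from each leaf to any ancestor
  with the same ideal.\<close>
definition epsA :: "'a list set \<Rightarrow> ('a list \<Rightarrow> 'x set \<times> nat) \<Rightarrow> 'a list \<Rightarrow> 'a list \<Rightarrow> bool" where
  "epsA T lab d d' \<longleftrightarrow> d \<in> T \<and> (\<forall>a. d @ [a] \<notin> T) \<and> strict_prefix d' d \<and> fst (lab d') = fst (lab d)"

definition epsK :: "'a list set \<Rightarrow> ('a list \<Rightarrow> 'x set \<times> nat) \<Rightarrow> ('a list \<Rightarrow> 'a list option)
     \<Rightarrow> 'a list \<Rightarrow> 'a list \<Rightarrow> bool" where
  "epsK T lab acc d d' \<longleftrightarrow> epsA T lab d d' \<or> (d \<in> T \<and> acc d = Some d')"

end

theory Submission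
  imports Defs
begin

lemma vw_parts:
  assumes "very_wsts step le"
  shows "wsts step le" "strongly_monotone step le"
    "\<forall>a I J J'. I \<in> Idl le \<and> cstep step le a I J \<and> cstep step le a I J' \<longrightarrow> J = J'"
    "\<forall>a I J I'. I \<in> Idl le \<and> I' \<in> Idl le \<and> cstep step le a I J \<and> I \<subseteq> I' \<longrightarrow>
         (\<exists>J'. cstep step le a I' J' \<and> J \<subseteq> J')"
  using assms unfolding very_wsts_def apply -
     apply (elim conjE, assumption)+
  done

lemma vw_wqo: "very_wsts step le \<Longrightarrow> wqo_on UNIV le"
proof -
  assume V: "very_wsts step le"
  from vw_parts(1)[OF V] show ?thesis unfolding wsts_def by blast
qed

lemma vle_refl: "very_wsts step le \<Longrightarrow> le x x"
proof -
  assume "very_wsts step le"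
  from vw_wqo[OF this] have "\<forall>x\<in>UNIV. le x x" unfolding wqo_on_def by blast
  then show ?thesis by simp
qed

lemma vle_trans: "very_wsts step le \<Longrightarrow> le x y \<Longrightarrow> le y z \<Longrightarrow> le x z"
proof -
  assume "very_wsts step le" "le x y" "le y z"
  from vw_wqo[OF this(1)] have "\<forall>x\<in>UNIV. \<forall>y\<in>UNIV. \<forall>z\<in>UNIV. le x y \<longrightarrow> le y z \<longrightarrow> le x z"
    unfolding wqo_on_def by blast
  then show ?thesis using \<open>le x y\<close> \<open>le y z\<close> by simp
qed

lemma vw_sm: "very_wsts step le \<Longrightarrow> strongly_monotone step le"
  by (rule vw_parts(2))

lemma vw_det: "very_wsts step le \<Longrightarrow> is_ideal le I \<Longrightarrow> cstep step le a I J \<Longrightarrow> cstep step le a I J' \<Longrightarrow> J = J'"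
proof -
  assume V: "very_wsts step le" and h: "is_ideal le I" "cstep step le a I J" "cstep step le a I J'"
  have "I \<in> Idl le" using h(1) unfolding Idl_def by simp
  with vw_parts(3)[OF V] h(2,3) show ?thesis by blast
qed

lemma vw_mono: "very_wsts step le \<Longrightarrow> is_ideal le I \<Longrightarrow> is_ideal le I' \<Longrightarrow> cstep step le a I J \<Longrightarrow> I \<subseteq> I'
   \<Longrightarrow> \<exists>J'. cstep step le a I' J' \<and> J \<subseteq> J'"
proof -
  assume V: "very_wsts step le" and h: "is_ideal le I" "is_ideal le I'" "cstep step le a I J" "I \<subseteq> I'"
  have "I \<in> Idl le" "I' \<in> Idl le" using h(1,2) unfolding Idl_def by simp_all
  with vw_parts(4)[OF V] h(3,4) show ?thesis by blast
qed

lemma steps_append: "steps step (u @ v) x z \<longleftrightarrow> (\<exists>y. steps step u x y \<and> steps step v y z)"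
  by (induction u arbitrary: x) auto

lemma steps_mono:
  assumes "strongly_monotone step le"
  shows "steps step w x y \<Longrightarrow> le x x' \<Longrightarrow> \<exists>y'. steps step w x' y' \<and> le y y'"
proof (induction w arbitrary: x x')
  case Nil then show ?case by auto
next
  case (Cons a w)
  from Cons.prems obtain x1 where 1: "step a x x1" "steps step w x1 y" by auto
  with assms Cons.prems(2) obtain x1' where 2: "step a x' x1'" "le x1 x1'"
    unfolding strongly_monotone_def by blast
  from Cons.IH[OF 1(2) 2(2)] obtain y' where "steps step w x1' y'" "le y y'" by blast
  with 2 show ?case by auto
qed

lemma succ_cstep: "succ step le a I = Some J \<Longrightarrow> cstep step le a I J"
  unfolding succ_def by (auto split: if_splits intro: theI')

lemma cstep_ideal: "cstep step le a I J \<Longrightarrow> is_ideal le J"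
  unfolding cstep_def IdealDecomp_def by auto

lemma cstep_back: "cstep step le a I J \<Longrightarrow> z \<in> J \<Longrightarrow> \<exists>x\<in>I. \<exists>z'. step a x z' \<and> le z z'"
  unfolding cstep_def IdealDecomp_def downclosure_def Post_def by blast

lemma det_succ:
  assumes V: "very_wsts step le" and I: "is_ideal le I" and c: "cstep step le a I J"
  shows "succ step le a I = Some J"
proof -
  have u: "\<exists>!J. cstep step le a I J" using c vw_det[OF V I] by blast
  have "(THE J. cstep step le a I J) = J"
    by (rule the_equality) (use c vw_det[OF V I] in blast)+
  with u show ?thesis unfolding succ_def by simp
qed

lemma wapp_back:
  assumes V: "very_wsts step le"
  shows "wapp step le u I = Some J \<Longrightarrow> z \<in> J \<Longrightarrow> \<exists>x\<in>I. \<exists>z'. steps step u x z' \<and> le z z'"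
proof (induction u arbitrary: I)
  case Nil then show ?case using vle_refl[OF V] by auto
next
  case (Cons a u)
  from Cons.prems obtain K where K: "succ step le a I = Some K" "wapp step le u K = Some J"
    by (auto split: option.splits)
  from Cons.IH[OF K(2) Cons.prems(2)] obtain x1 z1 where 1: "x1 \<in> K" "steps step u x1 z1" "le z z1"
    by blast
  from cstep_back[OF succ_cstep[OF K(1)] 1(1)] obtain x0 x2 where 2: "x0 \<in> I" "step a x0 x2" "le x1 x2"
    by blast
  from steps_mono[OF vw_sm[OF V] 1(2) 2(3)] obtain z2 where 3: "steps step u x2 z2" "le z1 z2" by blast
  have "le z z2" using vle_trans[OF V 1(3) 3(2)] .
  with 2 3 show ?case by auto
qed

lemma ex_wit: "x \<in> I \<Longrightarrow> steps step u x z' \<Longrightarrow> le z z' \<Longrightarrow> \<exists>x\<in>I. \<exists>u z'. steps step u x z' \<and> le z z'"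
  by blast

lemma wpow_back:
  assumes V: "very_wsts step le"
  shows "wpow step le v k I = Some J \<Longrightarrow> z \<in> J \<Longrightarrow> \<exists>x\<in>I. \<exists>u z'. steps step u x z' \<and> le z z'"
proof (induction k arbitrary: J z)
  case 0
  then have "z \<in> I" by simp
  moreover have "steps step [] z z" "le z z" using vle_refl[OF V] by simp_all
  ultimately show ?case by (rule ex_wit)
next
  case (Suc k)
  from Suc.prems obtain K where K: "wpow step le v k I = Some K" "wapp step le v K = Some J"
    by (cases "wpow step le v k I") auto
  from wapp_back[OF V K(2) Suc.prems(2)] obtain x z1 where 1: "x \<in> K" "steps step v x z1" "le z z1"
    by blast
  from Suc.IH[OF K(1) 1(1)] obtain x0 u x' where 2: "x0 \<in> I" "steps step u x0 x'" "le x x'" by blast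
  from steps_mono[OF vw_sm[OF V] 1(2) 2(3)] obtain z2 where 3: "steps step v x' z2" "le z1 z2" by blast
  have L: "le z z2" using vle_trans[OF V 1(3) 3(2)] .
  have S: "steps step (u @ v) x0 z2" by (rule iffD2[OF steps_append], rule exI[of _ x'], rule conjI[OF 2(2) 3(1)])
  show ?case by (rule ex_wit[where le=le and z=z, OF 2(1) S L])
qed

lemma winf_back:
  assumes V: "very_wsts step le"
  shows "z \<in> winf step le v I \<Longrightarrow> \<exists>x\<in>I. \<exists>u z'. steps step u x z' \<and> le z z'"
proof (cases "\<exists>J. wapp step le v I = Some J \<and> I \<subset> J")
  case True
  assume "z \<in> winf step le v I"
  then have "z \<in> \<Union>{J. \<exists>k. wpow step le v k I = Some J}" unfolding winf_def using True by simp
  then obtain J k where "wpow step le v k I = Some J" "z \<in> J" by blast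
  then show "\<exists>x\<in>I. \<exists>u z'. steps step u x z' \<and> le z z'" by (rule wpow_back[OF V])
next
  case False
  assume "z \<in> winf step le v I"
  then have "z \<in> I" unfolding winf_def using False by (simp only: if_not_P[OF False] if_False)
  moreover have "steps step [] z z" "le z z" using vle_refl[OF V] by auto
  ultimately show "\<exists>x\<in>I. \<exists>u z'. steps step u x z' \<and> le z z'" by (rule ex_wit)
qed

lemma winf_sup: "I \<subseteq> winf step le v I"
proof -
  have "wpow step le v 0 I = Some I" by simp
  show ?thesis
  proof (cases "\<exists>J. wapp step le v I = Some J \<and> I \<subset> J")
    case True then show ?thesis unfolding winf_def using \<open>wpow step le v 0 I = Some I\<close>
      by (simp only: if_P[OF True] if_True) blast
  next
    case False then show ?thesis unfolding winf_def by (simp only: if_not_P[OF False] if_False)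
  qed
qed

lemma is_idealD:
  "is_ideal le I \<Longrightarrow> I \<noteq> {}"
  "is_ideal le I \<Longrightarrow> x \<in> I \<Longrightarrow> le y x \<Longrightarrow> y \<in> I"
  "is_ideal le I \<Longrightarrow> x \<in> I \<Longrightarrow> y \<in> I \<Longrightarrow> \<exists>z\<in>I. le x z \<and> le y z"
  unfolding is_ideal_def by blast+

lemma ideal_Union_chain:
  assumes "\<And>J. J \<in> C \<Longrightarrow> is_ideal le J" "C \<noteq> {}" "\<And>A B. A \<in> C \<Longrightarrow> B \<in> C \<Longrightarrow> A \<subseteq> B \<or> B \<subseteq> A"
  shows "is_ideal le (\<Union>C)"
  unfolding is_ideal_def
proof (intro conjI ballI allI impI)
  obtain J where "J \<in> C" using assms(2) by blast
  moreover then obtain x where "x \<in> J" using is_idealD(1)[OF assms(1)] by blast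
  ultimately show "\<Union>C \<noteq> {}" by blast
next
  fix x y assume "x \<in> \<Union>C" "le y x"
  then obtain J where "J \<in> C" "x \<in> J" by blast
  then have "y \<in> J" using is_idealD(2)[OF assms(1)[OF \<open>J \<in> C\<close>] \<open>x \<in> J\<close> \<open>le y x\<close>] by blast
  then show "y \<in> \<Union>C" using \<open>J \<in> C\<close> by blast
next
  fix x y assume "x \<in> \<Union>C" "y \<in> \<Union>C"
  then obtain A B where AB: "A \<in> C" "B \<in> C" "x \<in> A" "y \<in> B" by blast
  show "\<exists>z\<in>\<Union>C. le x z \<and> le y z"
  proof (cases "A \<subseteq> B")
    case True
    then have "x \<in> B" using AB by blast
    from is_idealD(3)[OF assms(1)[OF AB(2)] this AB(4)] AB(2) show ?thesis by blast
  next
    case False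
    then have "B \<subseteq> A" using assms(3)[OF AB(1,2)] by blast
    then have "y \<in> A" using AB by blast
    from is_idealD(3)[OF assms(1)[OF AB(1)] AB(3) this] AB(1) show ?thesis by blast
  qed
qed

lemma wapp_ideal: "is_ideal le I \<Longrightarrow> wapp step le u I = Some J \<Longrightarrow> is_ideal le J"
proof (induction u arbitrary: I)
  case Nil then show ?case by simp
next
  case (Cons a u)
  from Cons.prems obtain K where K: "succ step le a I = Some K" "wapp step le u K = Some J"
    by (auto split: option.splits)
  show ?case using Cons.IH[OF cstep_ideal[OF succ_cstep[OF K(1)]] K(2)] .
qed

lemma wapp_mono:
  assumes V: "very_wsts step le"
  shows "is_ideal le I \<Longrightarrow> is_ideal le I' \<Longrightarrow> I \<subseteq> I' \<Longrightarrow> wapp step le u I = Some J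
    \<Longrightarrow> \<exists>J'. wapp step le u I' = Some J' \<and> J \<subseteq> J'"
proof (induction u arbitrary: I I')
  case Nil then show ?case by simp
next
  case (Cons a u)
  from Cons.prems obtain K where K: "succ step le a I = Some K" "wapp step le u K = Some J"
    by (auto split: option.splits)
  have cK: "cstep step le a I K" using succ_cstep[OF K(1)] .
  from vw_mono[OF V Cons.prems(1,2) cK Cons.prems(3)] obtain K' where
    K': "cstep step le a I' K'" "K \<subseteq> K'" by blast
  have sK': "succ step le a I' = Some K'" using det_succ[OF V Cons.prems(2) K'(1)] .
  from Cons.IH[OF cstep_ideal[OF cK] cstep_ideal[OF K'(1)] K'(2) K(2)] obtain J' where
    "wapp step le u K' = Some J'" "J \<subseteq> J'" by blast
  then show ?case using sK' by auto
qed

lemma winf_ideal: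
  assumes V: "very_wsts step le" and I: "is_ideal le I"
  shows "is_ideal le (winf step le w I)"
proof (cases "\<exists>J. wapp step le w I = Some J \<and> I \<subset> J")
  case False then show ?thesis using I unfolding winf_def by (simp only: if_not_P[OF False] if_False)
next
  case True
  then obtain J1 where J1: "wapp step le w I = Some J1" "I \<subseteq> J1" by blast
  have ch: "\<exists>J J'. wpow step le w k I = Some J \<and> wpow step le w (Suc k) I = Some J' \<and> J \<subseteq> J'
      \<and> is_ideal le J \<and> is_ideal le J'" for k
  proof (induction k)
    case 0 then show ?case using J1 I wapp_ideal[OF I J1(1)] by simp
  next
    case (Suc k)
    then obtain J J' where h: "wpow step le w k I = Some J" "wpow step le w (Suc k) I = Some J'"
      "J \<subseteq> J'" "is_ideal le J" "is_ideal le J'" by blast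
    have "wapp step le w J = Some J'" using h(1,2) by simp
    from wapp_mono[OF V h(4,5,3) this] obtain J'' where "wapp step le w J' = Some J''" "J' \<subseteq> J''"
      by blast
    moreover have "is_ideal le J''" using wapp_ideal[OF h(5) calculation(1)] .
    ultimately show ?case using h by auto
  qed
  define f where "f k = the (wpow step le w k I)" for k
  have fS: "wpow step le w k I = Some (f k)" for k using ch[of k] unfolding f_def by auto
  have fsub: "f k \<subseteq> f (Suc k)" for k using ch[of k] fS[of k] fS[of "Suc k"] by auto
  have fid: "is_ideal le (f k)" for k using ch[of k] fS[of k] by auto
  have fmono: "i \<le> j \<Longrightarrow> f i \<subseteq> f j" for i j using lift_Suc_mono_le[of f, OF fsub] by blast
  have eq: "{J. \<exists>k. wpow step le w k I = Some J} = range f" using fS by auto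
  have "is_ideal le (\<Union>(range f))"
  proof (rule ideal_Union_chain)
    show "\<And>J. J \<in> range f \<Longrightarrow> is_ideal le J" using fid by auto
    show "range f \<noteq> {}" by auto
    fix A B assume "A \<in> range f" "B \<in> range f"
    then obtain i j where "A = f i" "B = f j" by auto
    then show "A \<subseteq> B \<or> B \<subseteq> A" using fmono nat_le_linear[of i j] by blast
  qed
  then show ?thesis using True unfolding winf_def eq by simp
qed

lemma max_ideal:
  assumes V: "very_wsts step le" and y: "y' \<in> Post step I a"
  shows "\<exists>M. cstep step le a I M \<and> y' \<in> M"
proof -
  define Dc where "Dc = downclosure le (Post step I a)"
  define P where "P = {x. le x y'}"
  have Pid: "is_ideal le P" unfolding is_ideal_def
  proof (intro conjI ballI allI impI)
    show "P \<noteq> {}" using vle_refl[OF V, of y'] unfolding P_def by blast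
  next
    fix x y assume "x \<in> P" "le y x"
    then show "y \<in> P" unfolding P_def using vle_trans[OF V, of y x y'] by simp
  next
    fix x y assume "x \<in> P" "y \<in> P"
    then show "\<exists>z\<in>P. le x z \<and> le y z" using vle_refl[OF V, of y'] unfolding P_def by blast
  qed
  have PD: "P \<subseteq> Dc" unfolding P_def Dc_def downclosure_def using y by blast
  define A where "A = {J. is_ideal le J \<and> P \<subseteq> J \<and> J \<subseteq> Dc}"
  have "\<forall>C\<in>chains A. \<exists>U\<in>A. \<forall>X\<in>C. X \<subseteq> U"
  proof
    fix C assume C: "C \<in> chains A"
    show "\<exists>U\<in>A. \<forall>X\<in>C. X \<subseteq> U"
    proof (cases "C = {}")
      case True then show ?thesis using Pid PD unfolding A_def by auto
    next
      case False
      have "is_ideal le (\<Union>C)"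
        by (rule ideal_Union_chain) (use C False in \<open>auto simp: chains_def chain_subset_def A_def\<close>)
      moreover have "P \<subseteq> \<Union>C" "\<Union>C \<subseteq> Dc" using C False unfolding chains_def A_def by auto
      ultimately show ?thesis unfolding A_def by blast
    qed
  qed
  from Zorn_Lemma2[OF this] obtain M where M: "M \<in> A" "\<forall>X\<in>A. M \<subseteq> X \<longrightarrow> X = M" by blast
  have "cstep step le a I M" unfolding cstep_def IdealDecomp_def Dc_def[symmetric]
    using M unfolding A_def by blast
  moreover have "y' \<in> M" using M(1) vle_refl[OF V] unfolding A_def P_def by blast
  ultimately show ?thesis by blast
qed

lemma reach_trans: "reach T eps d v e \<Longrightarrow> reach T eps c u d \<Longrightarrow> reach T eps c (u @ v) e"
proof (induction rule: reach.induct)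
  case (refl c) then show ?case by simp
next
  case (arc c w d a)
  then show ?case by (metis append.assoc reach.arc)
next
  case (eps c w d d')
  then show ?case using reach.eps by blast
qed



context
  fixes step :: "'a::finite \<Rightarrow> 'x \<Rightarrow> 'x \<Rightarrow> bool" and le :: "'x \<Rightarrow> 'x \<Rightarrow> bool"
    and I0 :: "'x set" and T :: "'a list set" and lab :: "'a list \<Rightarrow> 'x set \<times> nat"
    and acc :: "'a list \<Rightarrow> 'a list option"
  assumes V: "very_wsts step le" and I0: "I0 \<in> Idl le" and KM: "KM_tree step le I0 T lab acc"
begin

abbreviation "PP c \<equiv> km_pre step le I0 lab c"

lemma node_spec: "c \<in> T \<Longrightarrow>
      (if \<exists>c'. strict_prefix c' c \<and> fst (lab c') = fst (PP c)
       then lab c = PP c \<and> acc c = None \<and> (\<forall>a. c @ [a] \<notin> T)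
       else (if \<exists>c'. strict_prefix c' c \<and> fst (lab c') \<subset> fst (PP c) \<and> snd (lab c') = snd (PP c)
             then (\<exists>c'. strict_prefix c' c \<and> fst (lab c') \<subset> fst (PP c) \<and> snd (lab c') = snd (PP c) \<and>
                     acc c = Some c' \<and>
                     lab c = (winf step le (drop (length c') c) (fst (PP c)), Suc (snd (PP c))))
             else lab c = PP c \<and> acc c = None)
         \<and> (\<forall>a. c @ [a] \<in> T \<longleftrightarrow> succ step le a (fst (lab c)) \<noteq> None))"
  using KM unfolding KM_tree_def Let_def by blast

lemma T_snoc: "c @ [a] \<in> T \<Longrightarrow> c \<in> T"
  using KM unfolding KM_tree_def by blast

lemma T_prefix: "c \<in> T \<Longrightarrow> prefix c' c \<Longrightarrow> c' \<in> T"
proof -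
  have "c' @ r \<in> T \<Longrightarrow> c' \<in> T" for r
    apply (induction r rule: rev_induct)
     apply simp
    using T_snoc by (metis append_assoc)
  then show "c \<in> T \<Longrightarrow> prefix c' c \<Longrightarrow> c' \<in> T" by (auto elim: prefixE)
qed

abbreviation "C1 c \<equiv> \<exists>c'. strict_prefix c' c \<and> fst (lab c') = fst (PP c)"
abbreviation "C2 c \<equiv> \<exists>c'. strict_prefix c' c \<and> fst (lab c') \<subset> fst (PP c) \<and> snd (lab c') = snd (PP c)"

lemma leaf_case: "c \<in> T \<Longrightarrow> C1 c \<Longrightarrow> lab c = PP c \<and> acc c = None \<and> (\<forall>a. c @ [a] \<notin> T)"
proof -
  assume c: "c \<in> T" and h: "C1 c"
  show ?thesis by (rule node_spec[OF c, unfolded if_P[OF h]])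
qed

lemma inner_case: "c \<in> T \<Longrightarrow> \<not> C1 c \<Longrightarrow>
    (if C2 c
     then (\<exists>c'. strict_prefix c' c \<and> fst (lab c') \<subset> fst (PP c) \<and> snd (lab c') = snd (PP c) \<and>
             acc c = Some c' \<and>
             lab c = (winf step le (drop (length c') c) (fst (PP c)), Suc (snd (PP c))))
     else lab c = PP c \<and> acc c = None)
    \<and> (\<forall>a. c @ [a] \<in> T \<longleftrightarrow> succ step le a (fst (lab c)) \<noteq> None)"
proof -
  assume c: "c \<in> T" and h: "\<not> C1 c"
  show ?thesis by (rule node_spec[OF c, unfolded if_not_P[OF h]])
qed

lemma acc_case: "c \<in> T \<Longrightarrow> \<not> C1 c \<Longrightarrow> C2 c \<Longrightarrow>
    (\<exists>c'. strict_prefix c' c \<and> fst (lab c') \<subset> fst (PP c) \<and> snd (lab c') = snd (PP c) \<and>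
             acc c = Some c' \<and>
             lab c = (winf step le (drop (length c') c) (fst (PP c)), Suc (snd (PP c))))"
proof -
  assume c: "c \<in> T" and h: "\<not> C1 c" and h2: "C2 c"
  show ?thesis by (rule conjunct1[OF inner_case[OF c h], unfolded if_P[OF h2]])
qed

lemma plain_case: "c \<in> T \<Longrightarrow> \<not> C1 c \<Longrightarrow> \<not> C2 c \<Longrightarrow> lab c = PP c \<and> acc c = None"
proof -
  assume c: "c \<in> T" and h: "\<not> C1 c" and h2: "\<not> C2 c"
  show ?thesis by (rule conjunct1[OF inner_case[OF c h], unfolded if_not_P[OF h2]])
qed

lemma children: "c \<in> T \<Longrightarrow> \<not> C1 c \<Longrightarrow> c @ [a] \<in> T \<longleftrightarrow> succ step le a (fst (lab c)) \<noteq> None"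
  using conjunct2[OF inner_case] by blast

lemma not_leaf: "c @ [a] \<in> T \<Longrightarrow> \<not> C1 c"
proof
  assume "c @ [a] \<in> T" "C1 c"
  with leaf_case[OF T_snoc[OF this(1)] this(2)] show False by blast
qed

lemma child_succ: "c @ [a] \<in> T \<Longrightarrow> succ step le a (fst (lab c)) \<noteq> None"
  using children[OF T_snoc not_leaf] by blast

lemma lab_form: "c \<in> T \<Longrightarrow> fst (lab c) = fst (PP c) \<or> (\<exists>v. fst (lab c) = winf step le v (fst (PP c)))"
proof -
  assume c: "c \<in> T"
  show ?thesis
  proof (cases "C1 c")
    case True then show ?thesis using leaf_case[OF c] by simp
  next
    case False
    show ?thesis
    proof (cases "C2 c")
      case True
      from acc_case[OF c False True] have "\<exists>v. fst (lab c) = winf step le v (fst (PP c))"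
        apply -
        apply (elim exE conjE)
        apply (rule_tac x="drop (length c') c" in exI)
        apply simp
        done
      then show ?thesis by blast
    next
      case F2: False then show ?thesis using plain_case[OF c False F2] by simp
    qed
  qed
qed

lemma lab_sup: "c \<in> T \<Longrightarrow> fst (PP c) \<subseteq> fst (lab c)"
proof -
  assume "c \<in> T"
  from lab_form[OF this] show ?thesis
  proof
    assume "fst (lab c) = fst (PP c)" then show ?thesis by simp
  next
    assume "\<exists>v. fst (lab c) = winf step le v (fst (PP c))"
    then obtain v where "fst (lab c) = winf step le v (fst (PP c))" by blast
    then show ?thesis using winf_sup by simp
  qed
qed

lemma acc_spec: "c \<in> T \<Longrightarrow> acc c = Some c' \<Longrightarrow> strict_prefix c' c \<and> fst (lab c') \<subset> fst (PP c)"
proof -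
  assume c: "c \<in> T" and a: "acc c = Some c'"
  show ?thesis
  proof (cases "C1 c")
    case True then show ?thesis using leaf_case[OF c] a by simp
  next
    case False
    show ?thesis
    proof (cases "C2 c")
      case True
      from acc_case[OF c False True] obtain c'' where
        "strict_prefix c'' c \<and> fst (lab c'') \<subset> fst (PP c) \<and> acc c = Some c''" by (elim exE conjE) (rule that, simp)
      then show ?thesis using a by simp
    next
      case F2: False then show ?thesis using plain_case[OF c False F2] a by simp
    qed
  qed
qed

lemma km_pre_snoc: "PP (c @ [a]) = (the (succ step le a (fst (lab c))), snd (lab c))"
  unfolding km_pre_def by simp

lemma lab_root: "fst (lab []) = I0"
proof -
  have "PP [] = (I0, 0)" unfolding km_pre_def by simp
  moreover have "[] \<in> T" using KM unfolding KM_tree_def by blast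
  ultimately show ?thesis using node_spec[of "[]"] by simp
qed

lemma lab_ideal: "c \<in> T \<Longrightarrow> is_ideal le (fst (lab c))"
proof (induction c rule: rev_induct)
  case Nil then show ?case using lab_root I0 unfolding Idl_def by simp
next
  case (snoc a c)
  obtain J where J: "succ step le a (fst (lab c)) = Some J" using child_succ[OF snoc.prems] by blast
  have Jid: "is_ideal le J" using cstep_ideal[OF succ_cstep[OF J]] .
  have "fst (PP (c @ [a])) = J" using km_pre_snoc J by simp
  then show ?case using lab_form[OF snoc.prems] Jid winf_ideal[OF V] by auto
qed

lemma strict_prefix_child: "strict_prefix c' c \<Longrightarrow> \<exists>b. prefix (c' @ [b]) c"
  by (erule strict_prefixE') auto

lemma one_step_nonleaf:
  assumes e: "e \<in> T" and nl: "\<not> (\<exists>c'. strict_prefix c' e \<and> fst (lab c') = fst (PP e))"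
    and y: "y \<in> fst (lab e)" and s: "step a y y'"
  shows "e @ [a] \<in> T \<and> y' \<in> fst (lab (e @ [a]))"
proof -
  have "y' \<in> Post step (fst (lab e)) a" unfolding Post_def using y s by blast
  from max_ideal[OF V this] obtain M where M: "cstep step le a (fst (lab e)) M" "y' \<in> M" by blast
  have sM: "succ step le a (fst (lab e)) = Some M" using det_succ[OF V lab_ideal[OF e] M(1)] .
  then have T1: "e @ [a] \<in> T" using children[OF e nl] by simp
  have "fst (PP (e @ [a])) = M" using km_pre_snoc sM by simp
  then show ?thesis using T1 lab_sup[OF T1] M(2) by blast
qed

lemma one_step:
  assumes c: "c \<in> T" and y: "y \<in> fst (lab c)" and s: "step a y y'"
  shows "\<exists>d. reach T (epsA T lab) c [a] d \<and> y' \<in> fst (lab d)"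
proof (cases "\<exists>c'. strict_prefix c' c \<and> fst (lab c') = fst (PP c)")
  case False
  from one_step_nonleaf[OF c False y s] have h: "c @ [a] \<in> T" "y' \<in> fst (lab (c @ [a]))" by auto
  have "reach T (epsA T lab) c ([] @ [a]) (c @ [a])"
    by (rule reach.arc[OF reach.refl[OF c] h(1)])
  then show ?thesis using h by auto
next
  case True
  then obtain c' where c': "strict_prefix c' c" "fst (lab c') = fst (PP c)" by blast
  have lc: "lab c = PP c" "\<forall>a. c @ [a] \<notin> T" using leaf_case[OF c True] by auto
  have c'T: "c' \<in> T" using T_prefix[OF c] c'(1) by (simp add: prefix_order.less_imp_le)
  have nl: "\<not> (\<exists>c''. strict_prefix c'' c' \<and> fst (lab c'') = fst (PP c'))"
  proof
    assume "\<exists>c''. strict_prefix c'' c' \<and> fst (lab c'') = fst (PP c')"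
    from leaf_case[OF c'T this] have "\<forall>a. c' @ [a] \<notin> T" by blast
    moreover obtain b where "prefix (c' @ [b]) c" using strict_prefix_child[OF c'(1)] by blast
    ultimately show False using T_prefix[OF c] by blast
  qed
  have eq: "fst (lab c') = fst (lab c)" using c'(2) lc(1) by simp
  from one_step_nonleaf[OF c'T nl _ s] y eq
  have h: "c' @ [a] \<in> T" "y' \<in> fst (lab (c' @ [a]))" by auto
  have "epsA T lab c c'" unfolding epsA_def using c lc(2) c'(1) eq by simp
  then have "reach T (epsA T lab) c [] c'" using reach.eps[OF reach.refl[OF c]] by blast
  from reach.arc[OF this h(1)] have "reach T (epsA T lab) c [a] (c' @ [a])" by simp
  then show ?thesis using h by blast
qed

lemma reachA_T: "reach T (epsA T lab) c w d \<Longrightarrow> d \<in> T"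
proof (induction rule: reach.induct)
  case (eps c w d d')
  then show ?case unfolding epsA_def using T_prefix by (blast intro: prefix_order.less_imp_le)
qed auto

lemma part1: "steps step w y z \<Longrightarrow> c \<in> T \<Longrightarrow> y \<in> fst (lab c) \<Longrightarrow>
   \<exists>d. reach T (epsA T lab) c w d \<and> z \<in> fst (lab d)"
proof (induction w arbitrary: y c)
  case Nil then show ?case using reach.refl by fastforce
next
  case (Cons a w)
  from Cons.prems(1) obtain y' where s: "step a y y'" "steps step w y' z" by auto
  from one_step[OF Cons.prems(2,3) s(1)] obtain d where d: "reach T (epsA T lab) c [a] d" "y' \<in> fst (lab d)"
    by blast
  from Cons.IH[OF s(2) reachA_T[OF d(1)] d(2)] obtain e where
    e: "reach T (epsA T lab) d w e" "z \<in> fst (lab e)" by blast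
  from reach_trans[OF e(1) d(1)] e(2) show ?case by auto
qed

lemma arc_back:
  assumes T1: "d @ [a] \<in> T" and z: "z \<in> fst (lab (d @ [a]))"
  shows "\<exists>x0\<in>fst (lab d). \<exists>u z'. steps step (a # u) x0 z' \<and> le z z'"
proof -
  obtain J where J: "succ step le a (fst (lab d)) = Some J" using child_succ[OF T1] by blast
  have PJ: "fst (PP (d @ [a])) = J" using km_pre_snoc J by simp
  have "\<exists>x\<in>J. \<exists>u z1. steps step u x z1 \<and> le z z1"
  proof (cases "fst (lab (d @ [a])) = J")
    case True
    have "steps step [] z z" "le z z" using vle_refl[OF V] by auto
    then show ?thesis using True z by blast
  next
    case False
    then obtain v where "fst (lab (d @ [a])) = winf step le v J" using lab_form[OF T1] PJ by auto
    then show ?thesis using winf_back[OF V] z by auto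
  qed
  then obtain x u z1 where 1: "x \<in> J" "steps step u x z1" "le z z1" by blast
  from cstep_back[OF succ_cstep[OF J] 1(1)] obtain x0 x2 where 2: "x0 \<in> fst (lab d)" "step a x0 x2" "le x x2"
    by blast
  from steps_mono[OF vw_sm[OF V] 1(2) 2(3)] obtain z2 where 3: "steps step u x2 z2" "le z1 z2" by blast
  have "le z z2" using vle_trans[OF V 1(3) 3(2)] .
  with 2 3 show ?thesis by auto
qed

lemma epsK_sub: "epsK T lab acc d d' \<Longrightarrow> fst (lab d') \<subseteq> fst (lab d)"
  unfolding epsK_def
proof (elim disjE conjE)
  assume "epsA T lab d d'" then show ?thesis unfolding epsA_def by simp
next
  assume "d \<in> T" "acc d = Some d'"
  from acc_spec[OF this] lab_sup[OF this(1)] show ?thesis by blast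
qed

lemma part2: "reach T (epsK T lab acc) c w d \<Longrightarrow> z \<in> fst (lab d) \<Longrightarrow>
   \<exists>y\<in>fst (lab c). \<exists>w' z'. subseq w w' \<and> le z z' \<and> steps step w' y z'"
proof (induction arbitrary: z rule: reach.induct)
  case (refl c)
  have "steps step [] z z" "le z z" "subseq [] []" using vle_refl[OF V] by auto
  then show ?case using refl by blast
next
  case (arc c w d a)
  from arc_back[OF arc.hyps(2) arc.prems] obtain x0 u z1 where
    1: "x0 \<in> fst (lab d)" "steps step (a # u) x0 z1" "le z z1" by blast
  from arc.IH[OF 1(1)] obtain y w' x' where 2: "y \<in> fst (lab c)" "subseq w w'" "le x0 x'" "steps step w' y x'"
    by blast
  from steps_mono[OF vw_sm[OF V] 1(2) 2(3)] obtain z2 where 3: "steps step (a # u) x' z2" "le z1 z2" by blast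
  have "le z z2" using vle_trans[OF V 1(3) 3(2)] .
  moreover have "steps step (w' @ a # u) y z2" by (rule iffD2[OF steps_append], rule exI[of _ x'], rule conjI[OF 2(4) 3(1)])
  moreover have "subseq (w @ [a]) (w' @ a # u)" using 2(2) by (simp add: list_emb_append_mono)
  ultimately show ?case using 2(1) by blast
next
  case (eps c w d d')
  then show ?case using epsK_sub by blast
qed

end

theorem proposition11:
  fixes step :: "'a::finite \<Rightarrow> 'x \<Rightarrow> 'x \<Rightarrow> bool"
    and le :: "'x \<Rightarrow> 'x \<Rightarrow> bool"
    and I0 :: "'x set"
    and T :: "'a list set"
    and lab :: "'a list \<Rightarrow> 'x set \<times> nat"
    and acc :: "'a list \<Rightarrow> 'a list option"
  assumes "very_wsts step le"
    and "I0 \<in> Idl le"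
    and "KM_tree step le I0 T lab acc"
  shows "(\<forall>y z w c. steps step w y z \<and> c \<in> T \<and> y \<in> fst (lab c) \<longrightarrow>
            (\<exists>d. reach T (epsA T lab) c w d \<and> z \<in> fst (lab d)))
       \<and> (\<forall>z w c d. c \<in> T \<and> reach T (epsK T lab acc) c w d \<and> z \<in> fst (lab d) \<longrightarrow>
            (\<exists>y\<in>fst (lab c). \<exists>w' z'. subseq w w' \<and> le z z' \<and> steps step w' y z'))"
  using part1[OF assms] part2[OF assms] by blast

end
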